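(* Let $G$ be a graph that has a barbell partition. Then there is a matrix $M\in\mathcal{S}(G)$ that does not have the strong Arnold property (and hence does not have the strong spectral property).
   Context: All graphs are finite, simple, undirected. For a graph $G$ with vertex set $\{1,\ldots,n\}$, $\mathcal{S}(G)$ is the set of all real symmetric $n\times n$ matrices $A=(a_{ij})$ such that for $i\neq j$, $a_{ij}\neq 0$ iff $\{i,j\}\in E(G)$ (diagonal arbitrary). A real symmetric matrix $A$ has the strong Arnold property (SAP) if the only real symmetric $X$ with $A\circ X=0$, $I\circ X=0$ and $AX=0$ is $X=0$; it has the strong spectral property (SSP) if the only real symmetric $X$ with $A\circ X=0$, $I\circ X=0$ and $AX-XA=0$ is $X=0$ ($\circ$ is the entrywise product). A barbell partition of $G$ is a partition of $V(G)$ into three disjoint sets $R,W_1,W_2$ such that: $R$ may be empty but $W_1\neq\emptyset$ and $W_2\neq\emptyset$; there are no edges between $W_1$ and $W_2$; and for every $v\in R$ and $i=1,2$, $|N_G(v)\cap W_i|\neq 1$, where $N_G(v)$ is the set of neighbours of $v$. *)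

theory Defs
  imports "HOL-Analysis.Analysis"
begin

definition simple_graph :: "('n::finite \<Rightarrow> 'n \<Rightarrow> bool) \<Rightarrow> bool" where
  "simple_graph E \<longleftrightarrow> (\<forall>u v. E u v = E v u) \<and> (\<forall>v. \<not> E v v)"

definition nbhd :: "('n \<Rightarrow> 'n \<Rightarrow> bool) \<Rightarrow> 'n \<Rightarrow> 'n set" where
  "nbhd E v = {u. E v u}"

definition hadamard :: "real^'n^'m \<Rightarrow> real^'n^'m \<Rightarrow> real^'n^'m" where
  "hadamard A B = (\<chi> i j. A $ i $ j * B $ i $ j)"

definition S_graph :: "('n::finite \<Rightarrow> 'n \<Rightarrow> bool) \<Rightarrow> (real^'n^'n) set" where
  "S_graph E = {A. transpose A = A \<and> (\<forall>i j. i \<noteq> j \<longrightarrow> (A $ i $ j \<noteq> 0 \<longleftrightarrow> E i j))}"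

definition SAP :: "real^'n^'n \<Rightarrow> bool" where
  "SAP A \<longleftrightarrow> (\<forall>X::real^'n^'n. transpose X = X \<and> hadamard A X = 0 \<and> hadamard (mat 1) X = 0
      \<and> A ** X = 0 \<longrightarrow> X = 0)"

definition SSP :: "real^'n^'n \<Rightarrow> bool" where
  "SSP A \<longleftrightarrow> (\<forall>X::real^'n^'n. transpose X = X \<and> hadamard A X = 0 \<and> hadamard (mat 1) X = 0
      \<and> A ** X - X ** A = 0 \<longrightarrow> X = 0)"

definition barbell_partition ::
  "('n::finite \<Rightarrow> 'n \<Rightarrow> bool) \<Rightarrow> 'n set \<Rightarrow> 'n set \<Rightarrow> 'n set \<Rightarrow> bool" where
  "barbell_partition E R W1 W2 \<longleftrightarrow>
     R \<union> W1 \<union> W2 = UNIV \<and> R \<inter> W1 = {} \<and> R \<inter> W2 = {} \<and> W1 \<inter> W2 = {} \<and>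
     W1 \<noteq> {} \<and> W2 \<noteq> {} \<and>
     (\<forall>u\<in>W1. \<forall>v\<in>W2. \<not> E u v) \<and>
     (\<forall>v\<in>R. card (nbhd E v \<inter> W1) \<noteq> 1 \<and> card (nbhd E v \<inter> W2) \<noteq> 1)"

end

theory Submission
  imports Defs
begin

definition wt :: "('n::finite \<Rightarrow> 'n \<Rightarrow> bool) \<Rightarrow> 'n set \<Rightarrow> 'n \<Rightarrow> 'n \<Rightarrow> real" where
  "wt E W v j = (if j = (SOME c. c \<in> nbhd E v \<inter> W) then 1 - real (card (nbhd E v \<inter> W)) else 1)"

definition offd :: "('n::finite \<Rightarrow> 'n \<Rightarrow> bool) \<Rightarrow> 'n set \<Rightarrow> 'n set \<Rightarrow> 'n set \<Rightarrow> 'n \<Rightarrow> 'n \<Rightarrow> real" where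
  "offd E R W1 W2 i j = (if \<not> E i j then 0
     else if i \<in> R \<and> j \<in> W1 then wt E W1 i j
     else if i \<in> R \<and> j \<in> W2 then wt E W2 i j
     else if j \<in> R \<and> i \<in> W1 then wt E W1 j i
     else if j \<in> R \<and> i \<in> W2 then wt E W2 j i else 1)"

lemma wt_nz:
  fixes E :: "'n::finite \<Rightarrow> 'n \<Rightarrow> bool"
  assumes "E v j" "j \<in> W" "card (nbhd E v \<inter> W) \<noteq> 1"
  shows "wt E W v j \<noteq> 0"
proof -
  have "j \<in> nbhd E v \<inter> W" using assms by (simp add: nbhd_def)
  hence "card (nbhd E v \<inter> W) \<noteq> 0" by (metis card_0_eq empty_iff finite)
  hence "card (nbhd E v \<inter> W) \<ge> 2" using assms(3) by linarith
  thus ?thesis unfolding wt_def by auto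
qed

lemma wt_sum:
  fixes E :: "'n::finite \<Rightarrow> 'n \<Rightarrow> bool"
  assumes "card (nbhd E v \<inter> W) \<noteq> 1"
  shows "(\<Sum>j\<in>W. if E v j then wt E W v j else 0) = 0"
proof -
  define S where "S = nbhd E v \<inter> W"
  have "(\<Sum>j\<in>W. if E v j then wt E W v j else 0) = (\<Sum>j\<in>W \<inter> {j. E v j}. wt E W v j)"
    by (simp add: sum.inter_restrict)
  also have "W \<inter> {j. E v j} = S" by (auto simp: S_def nbhd_def)
  finally have eq: "(\<Sum>j\<in>W. if E v j then wt E W v j else 0) = (\<Sum>j\<in>S. wt E W v j)" .
  show ?thesis
  proof (cases "S = {}")
    case True thus ?thesis using eq by simp
  next
    case False
    define c where "c = (SOME c. c \<in> S)"
    have c: "c \<in> S" unfolding c_def using False by (simp add: some_in_eq)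
    have fin: "finite S" by simp
    have "(\<Sum>j\<in>S. wt E W v j) = wt E W v c + (\<Sum>j\<in>S - {c}. wt E W v j)"
      using c fin by (simp add: sum.remove)
    also have "(\<Sum>j\<in>S - {c}. wt E W v j) = (\<Sum>j\<in>S - {c}. 1)"
      by (rule sum.cong) (auto simp: wt_def c_def S_def)
    also have "\<dots> = real (card S) - 1"
    proof -
      have "card S \<ge> 1" using c fin by (metis One_nat_def Suc_leI card_gt_0_iff empty_iff)
      thus ?thesis using c fin by (simp add: card_Diff_singleton of_nat_diff)
    qed
    also have "wt E W v c = 1 - real (card S)" by (simp add: wt_def c_def S_def)
    finally show ?thesis using eq by simp
  qed
qed

theorem lemma2p5:
  fixes E :: "'n::finite \<Rightarrow> 'n \<Rightarrow> bool"
  assumes "simple_graph E"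
    and "\<exists>R W1 W2. barbell_partition E R W1 W2"
  shows "\<exists>M \<in> S_graph E. \<not> SAP M \<and> \<not> SSP M"
proof -
  obtain R W1 W2 where bp: "barbell_partition E R W1 W2" using assms(2) by blast
  have sym: "\<And>u v. E u v = E v u" and irr: "\<And>v. \<not> E v v"
    using assms(1) by (auto simp: simple_graph_def)
  have cov: "\<And>x. x \<in> R \<or> x \<in> W1 \<or> x \<in> W2" using bp by (auto simp: barbell_partition_def)
  have d1: "\<And>x. x \<in> R \<Longrightarrow> x \<notin> W1" and d2: "\<And>x. x \<in> R \<Longrightarrow> x \<notin> W2"
    and d3: "\<And>x. x \<in> W1 \<Longrightarrow> x \<notin> W2"
    using bp by (auto simp: barbell_partition_def)
  have ne: "\<And>u v. u \<in> W1 \<Longrightarrow> v \<in> W2 \<Longrightarrow> \<not> E u v" using bp by (auto simp: barbell_partition_def)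
  have ne': "\<And>u v. u \<in> W2 \<Longrightarrow> v \<in> W1 \<Longrightarrow> \<not> E u v" using ne sym by blast
  have c1: "\<And>v. v \<in> R \<Longrightarrow> card (nbhd E v \<inter> W1) \<noteq> 1"
    and c2: "\<And>v. v \<in> R \<Longrightarrow> card (nbhd E v \<inter> W2) \<noteq> 1"
    using bp by (auto simp: barbell_partition_def)
  obtain a b where a: "a \<in> W1" and b: "b \<in> W2" using bp by (auto simp: barbell_partition_def)
  define f where "f = offd E R W1 W2"
  define d where "d i = (if i \<in> W1 then - (\<Sum>j\<in>W1 - {i}. f i j)
      else if i \<in> W2 then - (\<Sum>j\<in>W2 - {i}. f i j) else 0)" for i
  define M :: "real^'n^'n" where "M = (\<chi> i j. if i = j then d i else f i j)"
  define X :: "real^'n^'n" where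
    "X = (\<chi> i j. if (i \<in> W1 \<and> j \<in> W2) \<or> (i \<in> W2 \<and> j \<in> W1) then 1 else 0)"
  have fsym: "f i j = f j i" for i j
    unfolding f_def offd_def using sym d1 d2 d3 by auto
  have fnz: "f i j \<noteq> 0 \<longleftrightarrow> E i j" if "i \<noteq> j" for i j
    unfolding f_def offd_def using wt_nz[of E _ _ W1] wt_nz[of E _ _ W2] c1 c2 sym
    by (auto simp: sym)
  have MS: "M \<in> S_graph E"
    unfolding S_graph_def M_def using fnz fsym
    by (auto simp: transpose_def vec_eq_iff)
  have Mij: "M $ i $ j = (if i = j then d i else f i j)" for i j by (simp add: M_def)
  have same: "(\<Sum>j\<in>W. M $ i $ j) = 0" if "W = W1 \<or> W = W2" "i \<in> W" for i W
  proof -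
    have "(\<Sum>j\<in>W. M $ i $ j) = M $ i $ i + (\<Sum>j\<in>W - {i}. M $ i $ j)"
      using that by (simp add: sum.remove)
    also have "(\<Sum>j\<in>W - {i}. M $ i $ j) = (\<Sum>j\<in>W - {i}. f i j)"
      by (rule sum.cong) (auto simp: Mij)
    finally show ?thesis using that d3 by (auto simp: Mij d_def)
  qed
  have other: "(\<Sum>j\<in>W. M $ i $ j) = 0" if "W = W1 \<and> i \<in> W2 \<or> W = W2 \<and> i \<in> W1" for i W
  proof -
    have "(\<Sum>j\<in>W. M $ i $ j) = (\<Sum>j\<in>W. 0)"
      using that d1 d2 d3 ne ne' by (intro sum.cong) (auto simp: Mij f_def offd_def)
    thus ?thesis by simp
  qed
  have fromR: "(\<Sum>j\<in>W. M $ i $ j) = 0" if "W = W1 \<or> W = W2" "i \<in> R" for i W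
  proof -
    have "(\<Sum>j\<in>W. M $ i $ j) = (\<Sum>j\<in>W. if E i j then wt E W i j else 0)"
      using that d1 d2 d3 by (intro sum.cong) (auto simp: Mij f_def offd_def)
    also have "\<dots> = 0" using that c1 c2 by (intro wt_sum) auto
    finally show ?thesis .
  qed
  have rowsum: "(\<Sum>j\<in>W. M $ i $ j) = 0" if W: "W = W1 \<or> W = W2" for i W
    using cov[of i] same[OF W] other fromR[OF W] W by blast
  have MX: "M ** X = 0"
  proof -
    have "(\<Sum>j\<in>UNIV. M $ i $ j * X $ j $ k) = 0" for i k
    proof -
      consider "k \<in> R" | "k \<in> W1" | "k \<in> W2" using cov by blast
      thus ?thesis
      proof cases
        case 1 thus ?thesis using d1 d2 by (simp add: X_def)
      next
        case 2
        hence "(\<Sum>j\<in>UNIV. M $ i $ j * X $ j $ k) = (\<Sum>j\<in>UNIV. if j \<in> W2 then M $ i $ j else 0)"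
          using d3 by (intro sum.cong) (auto simp: X_def)
        also have "\<dots> = (\<Sum>j\<in>W2. M $ i $ j)" by (simp add: sum.inter_restrict[symmetric])
        finally show ?thesis using rowsum by simp
      next
        case 3
        hence "(\<Sum>j\<in>UNIV. M $ i $ j * X $ j $ k) = (\<Sum>j\<in>UNIV. if j \<in> W1 then M $ i $ j else 0)"
          using d3 by (intro sum.cong) (auto simp: X_def)
        also have "\<dots> = (\<Sum>j\<in>W1. M $ i $ j)" by (simp add: sum.inter_restrict[symmetric])
        finally show ?thesis using rowsum by simp
      qed
    qed
    thus ?thesis by (simp add: matrix_matrix_mult_def vec_eq_iff)
  qed
  have tM: "transpose M = M" using MS by (simp add: S_graph_def)
  have tX: "transpose X = X" by (auto simp: X_def transpose_def vec_eq_iff)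
  have XM: "X ** M = 0"
  proof -
    have "X ** M = transpose (M ** X)" using tM tX by (simp add: matrix_transpose_mul)
    also have "\<dots> = 0" using MX by (simp add: transpose_def vec_eq_iff)
    finally show ?thesis .
  qed
  have hX: "hadamard M X = 0"
    using ne ne' d3 by (auto simp: hadamard_def M_def X_def vec_eq_iff f_def offd_def)
  have h1: "hadamard (mat 1) X = 0"
    using d3 by (auto simp: hadamard_def mat_def X_def vec_eq_iff)
  have Xnz: "X \<noteq> 0"
  proof
    assume "X = 0"
    hence "X $ a $ b = 0" by simp
    thus False using a b by (simp add: X_def)
  qed
  have "\<not> SAP M" unfolding SAP_def using tX hX h1 MX Xnz by blast
  moreover have "\<not> SSP M" unfolding SSP_def using tX hX h1 MX XM Xnz by auto
  ultimately show ?thesis using MS by blast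
qed

end
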